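(* Let $(X,T)$ be a linearly recurrent minimal Cantor system with a sequence of CKR partitions satisfying (KR1)–(KR6) and (LR), and $\mu$ its unique invariant probability measure. There exist $c\ge0$ and $\beta\in[0,1)$ such that for all $n,k\in\mathbb N$ with $k\le n$, $$\sup_{1\le t\le C(n-k),\,1\le\bar t\le C(n)}\big|\mu[\tau_n=\bar t\mid\tau_{n-k}=t]-\mu[\tau_n=\bar t]\big|\le c\beta^k.$$
   Context: Minimal Cantor system, CKR partitions $\mathcal P(n)=\{T^{-j}B_k(n):1\le k\le C(n),0\le j<h_k(n)\}$ with $\mathcal P(0)$ trivial, roof $B(n)=\bigcup_kB_k(n)$, towers $\mathcal T_k(n)=\bigcup_{0\le j<h_k(n)}T^{-j}B_k(n)$, conditions (KR1) $B(n+1)\subseteq B(n)$; (KR2) $\mathcal P(n+1)$ refines $\mathcal P(n)$; (KR3) $\bigcap_nB(n)$ is one point; (KR4) the partitions generate the topology; (KR5) for all $n\ge1$, $k\le C(n-1)$, $l\le C(n)$ some $0\le j<h_l(n)$ has $T^{-j}B_l(n)\subseteq B_k(n-1)$; (KR6) $B(n)\subseteq B_1(n-1)$; (LR) $h_l(n)\le Lh_k(n-1)$ for a constant $L$. $\tau_n(x)=k$ iff $x\in\mathcal T_k(n)$; $(\tau_n)$ is a non-stationary Markov chain under $\mu$. *)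

theory Defs
  imports "HOL-Probability.Probability"
begin

text \<open>The Cantor system is (UNIV :: 'a set, T) for a metric space type 'a.
  The notation T^{-j} A of the paper is the preimage of A under the j-th iterate of T.\<close>

definition preT :: "('a \<Rightarrow> 'a) \<Rightarrow> nat \<Rightarrow> 'a set \<Rightarrow> 'a set" where
  "preT T j A = (T ^^ j) -` A"

definition cantor_space :: "'a::metric_space itself \<Rightarrow> bool" where
  "cantor_space _ \<longleftrightarrow> compact (UNIV :: 'a set)
     \<and> (\<forall>x::'a. \<not> open {x})
     \<and> (\<forall>x::'a. connected_component_set UNIV x = {x})"

definition minimal_system :: "('a::topological_space \<Rightarrow> 'a) \<Rightarrow> bool" where
  "minimal_system T \<longleftrightarrow>
     (\<forall>F. closed F \<and> T ` F = F \<longrightarrow> F = {} \<or> F = UNIV)"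

definition invariant_prob :: "('a::topological_space \<Rightarrow> 'a) \<Rightarrow> 'a measure \<Rightarrow> bool" where
  "invariant_prob T \<mu> \<longleftrightarrow> prob_space \<mu> \<and> sets \<mu> = sets borel
     \<and> (\<forall>A \<in> sets borel. emeasure \<mu> (T -` A) = emeasure \<mu> A)"

definition KR_index :: "(nat \<Rightarrow> nat) \<Rightarrow> (nat \<Rightarrow> nat \<Rightarrow> nat) \<Rightarrow> nat \<Rightarrow> (nat \<times> nat) set" where
  "KR_index C h n = {(k, j). 1 \<le> k \<and> k \<le> C n \<and> j < h n k}"

definition KR_atom :: "('a \<Rightarrow> 'a) \<Rightarrow> (nat \<Rightarrow> nat \<Rightarrow> 'a set) \<Rightarrow> nat \<Rightarrow> nat \<times> nat \<Rightarrow> 'a set" where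
  "KR_atom T B n kj = preT T (snd kj) (B n (fst kj))"

definition roof :: "(nat \<Rightarrow> nat) \<Rightarrow> (nat \<Rightarrow> nat \<Rightarrow> 'a set) \<Rightarrow> nat \<Rightarrow> 'a set" where
  "roof C B n = (\<Union>k\<in>{1..C n}. B n k)"

definition tower :: "('a \<Rightarrow> 'a) \<Rightarrow> (nat \<Rightarrow> nat \<Rightarrow> nat) \<Rightarrow> (nat \<Rightarrow> nat \<Rightarrow> 'a set) \<Rightarrow> nat \<Rightarrow> nat \<Rightarrow> 'a set" where
  "tower T h B n k = (\<Union>j<h n k. preT T j (B n k))"

definition KR_partition :: "('a::topological_space \<Rightarrow> 'a) \<Rightarrow> (nat \<Rightarrow> nat) \<Rightarrow> (nat \<Rightarrow> nat \<Rightarrow> nat)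
    \<Rightarrow> (nat \<Rightarrow> nat \<Rightarrow> 'a set) \<Rightarrow> nat \<Rightarrow> bool" where
  "KR_partition T C h B n \<longleftrightarrow>
     (\<forall>k\<in>{1..C n}. open (B n k) \<and> closed (B n k) \<and> B n k \<noteq> {} \<and> 1 \<le> h n k)
     \<and> (\<forall>a\<in>KR_index C h n. \<forall>b\<in>KR_index C h n. a \<noteq> b \<longrightarrow>
           KR_atom T B n a \<inter> KR_atom T B n b = {})
     \<and> (\<Union>a\<in>KR_index C h n. KR_atom T B n a) = UNIV"

definition CKR_sequence :: "('a::topological_space \<Rightarrow> 'a) \<Rightarrow> (nat \<Rightarrow> nat) \<Rightarrow> (nat \<Rightarrow> nat \<Rightarrow> nat)
    \<Rightarrow> (nat \<Rightarrow> nat \<Rightarrow> 'a set) \<Rightarrow> bool" where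
  "CKR_sequence T C h B \<longleftrightarrow>
     (\<forall>n. KR_partition T C h B n)
     \<comment> \<open>P(0) is trivial\<close>
     \<and> C 0 = 1 \<and> h 0 1 = 1 \<and> B 0 1 = UNIV
     \<comment> \<open>(KR1)\<close>
     \<and> (\<forall>n. roof C B (Suc n) \<subseteq> roof C B n)
     \<comment> \<open>(KR2)\<close>
     \<and> (\<forall>n. \<forall>a\<in>KR_index C h (Suc n). \<exists>b\<in>KR_index C h n.
            KR_atom T B (Suc n) a \<subseteq> KR_atom T B n b)
     \<comment> \<open>(KR3)\<close>
     \<and> (\<exists>x. (\<Inter>n. roof C B n) = {x})
     \<comment> \<open>(KR4): the atoms of all P(n) form a base of the topology\<close>
     \<and> (\<forall>U x. open U \<and> x \<in> U \<longrightarrow>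
            (\<exists>n. \<exists>a\<in>KR_index C h n. x \<in> KR_atom T B n a \<and> KR_atom T B n a \<subseteq> U))
     \<comment> \<open>(KR5)\<close>
     \<and> (\<forall>n\<ge>1. \<forall>k\<in>{1..C (n - 1)}. \<forall>l\<in>{1..C n}. \<exists>j<h n l.
            preT T j (B n l) \<subseteq> B (n - 1) k)
     \<comment> \<open>(KR6)\<close>
     \<and> (\<forall>n\<ge>1. roof C B n \<subseteq> B (n - 1) 1)"

definition LR_condition :: "(nat \<Rightarrow> nat) \<Rightarrow> (nat \<Rightarrow> nat \<Rightarrow> nat) \<Rightarrow> bool" where
  "LR_condition C h \<longleftrightarrow> (\<exists>L::nat. \<forall>n\<ge>1. \<forall>l\<in>{1..C n}. \<forall>k\<in>{1..C (n - 1)}.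
       h n l \<le> L * h (n - 1) k)"

text \<open>Conditional probability \<mu>[\<tau>_n = tb | \<tau>_m = t].\<close>
definition cond_tower_prob :: "'a measure \<Rightarrow> ('a \<Rightarrow> 'a) \<Rightarrow> (nat \<Rightarrow> nat \<Rightarrow> nat)
    \<Rightarrow> (nat \<Rightarrow> nat \<Rightarrow> 'a set) \<Rightarrow> nat \<Rightarrow> nat \<Rightarrow> nat \<Rightarrow> nat \<Rightarrow> real" where
  "cond_tower_prob \<mu> T h B n tb m t =
     measure \<mu> (tower T h B n tb \<inter> tower T h B m t) / measure \<mu> (tower T h B m t)"

end

theory Submission
  imports Defs
begin


locale ckr =
  fixes T :: "'a::metric_space \<Rightarrow> 'a"
    and C :: "nat \<Rightarrow> nat" and h :: "nat \<Rightarrow> nat \<Rightarrow> nat" and B :: "nat \<Rightarrow> nat \<Rightarrow> 'a set"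
    and \<mu> :: "'a measure"
  assumes bijT: "bij T" and contT: "continuous_on UNIV T"
    and ckrs: "CKR_sequence T C h B" and invp: "invariant_prob T \<mu>"
begin

definition S where "S = inv T"

lemma TS[simp]: "T (S x) = x" unfolding S_def using bijT by (simp add: bij_is_surj surj_f_inv_f)
lemma ST[simp]: "S (T x) = x" unfolding S_def using bijT by (simp add: bij_is_inj inv_f_f)

lemma TjSj: "(T^^j) ((S^^j) x) = x"
proof (induction j arbitrary: x)
  case (Suc j)
  have e: "S ((S^^j) x) = (S^^j) (S x)" by (rule funpow_swap1)
  have "(T^^Suc j) ((S^^Suc j) x) = T ((T^^j) ((S^^j) (S x)))"
    by (simp only: e[symmetric] funpow.simps(2) comp_def)
  also have "\<dots> = x" using Suc by simp
  finally show ?case .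
qed simp

lemma TjSi: "j \<le> i \<Longrightarrow> (T^^j) ((S^^i) x) = (S^^(i-j)) x"
proof -
  assume "j \<le> i"
  then obtain d where "i = j + d" using le_Suc_ex by blast
  then have "(S^^i) x = (S^^j) ((S^^d) x)" by (simp add: funpow_add)
  then show ?thesis using \<open>i = j + d\<close> by (simp add: TjSj)
qed

lemma part: "KR_partition T C h B n" using ckrs[unfolded CKR_sequence_def, THEN conjunct1] by (rule spec)

abbreviation "idx n \<equiv> KR_index C h n"
abbreviation "atom n a \<equiv> KR_atom T B n a"
abbreviation "rng n \<equiv> {1..C n}"

lemma idx_eq: "idx n = Sigma (rng n) (\<lambda>k. {..<h n k})"
  unfolding KR_index_def by auto

lemma finite_idx: "finite (idx n)" unfolding idx_eq by auto

lemma part1: "k \<in> rng n \<Longrightarrow> open (B n k) \<and> closed (B n k) \<and> B n k \<noteq> {} \<and> 1 \<le> h n k"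
  using part[of n, unfolded KR_partition_def, THEN conjunct1] by (rule bspec)
lemma h_pos: "k \<in> rng n \<Longrightarrow> 1 \<le> h n k" using part1 by simp
lemma B_ne: "k \<in> rng n \<Longrightarrow> B n k \<noteq> {}" using part1 by simp
lemma B_open: "k \<in> rng n \<Longrightarrow> open (B n k)" using part1 by simp

lemma atom_disj: "a \<in> idx n \<Longrightarrow> b \<in> idx n \<Longrightarrow> a \<noteq> b \<Longrightarrow> atom n a \<inter> atom n b = {}"
  using part[of n, unfolded KR_partition_def, THEN conjunct2, THEN conjunct1] by blast

lemma atom_cover: "\<exists>a\<in>idx n. y \<in> atom n a"
proof -
  have "(\<Union>a\<in>idx n. atom n a) = UNIV"
    using part[of n, unfolded KR_partition_def, THEN conjunct2, THEN conjunct2] .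
  then have "y \<in> (\<Union>a\<in>idx n. atom n a)" by simp
  then show ?thesis by simp
qed

definition addr where "addr n y = (THE a. a \<in> idx n \<and> y \<in> atom n a)"
definition lab where "lab n y = fst (addr n y)"

lemma addr_eq: assumes "a \<in> idx n" "y \<in> atom n a" shows "addr n y = a"
  unfolding addr_def
proof (rule the_equality)
  show "a \<in> idx n \<and> y \<in> atom n a" using assms by blast
  fix b assume "b \<in> idx n \<and> y \<in> atom n b"
  then show "b = a" using atom_disj[of b n a] assms by blast
qed

lemma addr_in: "addr n y \<in> idx n \<and> y \<in> atom n (addr n y)"
  using atom_cover[of n y] addr_eq by metis

lemma lab_rng: "lab n y \<in> rng n"
  using addr_in[of n y] unfolding lab_def KR_index_def by auto

lemma atom_mem: "y \<in> atom n (k,j) \<longleftrightarrow> (T^^j) y \<in> B n k"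
  unfolding KR_atom_def preT_def by simp

lemma C_pos: "1 \<le> C n"
  using addr_in[of n undefined] unfolding KR_index_def by auto

lemma S_atom: assumes "x \<in> B p r" "r \<in> rng p" "i < h p r"
  shows "addr p ((S^^i) x) = (r,i)"
  using assms by (intro addr_eq) (auto simp: KR_index_def atom_mem TjSi)

lemma roof_iff: "y \<in> roof C B n \<longleftrightarrow> snd (addr n y) = 0"
proof
  assume "y \<in> roof C B n"
  then obtain k where k: "k \<in> rng n" "y \<in> B n k" unfolding roof_def by blast
  then have "addr n y = (k,0)" using h_pos[OF k(1)]
    by (intro addr_eq) (auto simp: KR_index_def atom_mem)
  then show "snd (addr n y) = 0" by simp
next
  assume "snd (addr n y) = 0"
  then show "y \<in> roof C B n" using addr_in[of n y] unfolding roof_def KR_index_def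
    by (cases "addr n y") (auto simp: atom_mem)
qed

lemma S_notroof: assumes "x \<in> B p r" "r \<in> rng p" "0 < i" "i < h p r"
  shows "(S^^i) x \<notin> roof C B p"
  using S_atom[OF assms(1,2,4)] assms(3) roof_iff by simp

lemma S_h_roof: assumes "x \<in> B p r" "r \<in> rng p"
  shows "(S^^(h p r)) x \<in> roof C B p"
proof (rule ccontr)
  let ?y = "(S^^(h p r)) x"
  assume "?y \<notin> roof C B p"
  obtain r' j' where a: "addr p ?y = (r',j')" by (cases "addr p ?y")
  with roof_iff \<open>?y \<notin> _\<close> have "j' \<noteq> 0" by simp
  have ai: "(r',j') \<in> idx p" "?y \<in> atom p (r',j')" using addr_in[of p ?y] a by auto
  have hp: "1 \<le> h p r" using h_pos[OF assms(2)] .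
  obtain h' where h': "h p r = Suc h'" using hp by (cases "h p r") auto
  have "T ?y = (S^^(h p r - 1)) x" by (simp add: h')
  then have A1: "addr p (T ?y) = (r, h p r - 1)" using S_atom[OF assms] hp by simp
  obtain j'' where j'': "j' = Suc j''" using \<open>j' \<noteq> 0\<close> by (cases j') auto
  have "(T^^(j'-1)) (T ?y) = (T^^j') ?y"
    by (simp add: j'' funpow_swap1)
  then have "T ?y \<in> atom p (r', j'-1)" using ai(2) by (simp add: atom_mem)
  moreover have "(r', j'-1) \<in> idx p" using ai(1) by (auto simp: KR_index_def)
  ultimately have "addr p (T ?y) = (r', j'-1)" by (rule addr_eq[rotated])
  with A1 have "r' = r" "j' - 1 = h p r - 1" by auto
  then have "j' = h p r" using \<open>j' \<noteq> 0\<close> hp by simp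
  with ai(1) \<open>r' = r\<close> show False by (auto simp: KR_index_def)
qed

lemma KR2: "a \<in> idx (Suc n) \<Longrightarrow> \<exists>b\<in>idx n. atom (Suc n) a \<subseteq> atom n b"
  using ckrs[unfolded CKR_sequence_def, THEN conjunct2, THEN conjunct2, THEN conjunct2,
      THEN conjunct2, THEN conjunct2, THEN conjunct1] by blast

lemma KR1: "roof C B (Suc n) \<subseteq> roof C B n"
  using ckrs[unfolded CKR_sequence_def, THEN conjunct2, THEN conjunct2, THEN conjunct2,
      THEN conjunct2, THEN conjunct1] by blast

lemma refine: "m \<le> n \<Longrightarrow> a \<in> idx n \<Longrightarrow> \<exists>b\<in>idx m. atom n a \<subseteq> atom m b"
proof (induction n arbitrary: a rule: dec_induct)
  case base then show ?case by blast
next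
  case (step n)
  obtain b where "b \<in> idx n" "atom (Suc n) a \<subseteq> atom n b" using KR2[OF step.prems] by blast
  with step.IH show ?case by blast
qed

lemma roof_mono: "m \<le> n \<Longrightarrow> roof C B n \<subseteq> roof C B m"
  by (induction n rule: dec_induct) (use KR1 in blast)+

lemma addr_const: assumes "m \<le> n" "a \<in> idx n" "y \<in> atom n a" "y' \<in> atom n a"
  shows "addr m y = addr m y'"
proof -
  obtain b where "b \<in> idx m" "atom n a \<subseteq> atom m b" using refine[OF assms(1,2)] by blast
  then show ?thesis using assms(3,4) addr_eq by (metis subsetD)
qed

lemma tower_iff: assumes "t \<in> rng m" shows "y \<in> tower T h B m t \<longleftrightarrow> lab m y = t"
proof
  assume "y \<in> tower T h B m t"
  then obtain j where "j < h m t" "y \<in> atom m (t,j)" unfolding tower_def KR_atom_def by auto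
  then have "addr m y = (t,j)" using assms by (intro addr_eq) (auto simp: KR_index_def)
  then show "lab m y = t" by (simp add: lab_def)
next
  assume "lab m y = t"
  then obtain j where "addr m y = (t,j)" unfolding lab_def by (cases "addr m y") auto
  then show "y \<in> tower T h B m t" using addr_in[of m y] unfolding tower_def KR_atom_def KR_index_def
    by auto
qed

definition xs where "xs n s = (SOME x. x \<in> B n s)"
lemma xs_in: "s \<in> rng n \<Longrightarrow> xs n s \<in> B n s"
  unfolding xs_def using B_ne by (simp add: some_in_eq)

definition cnt :: "nat \<Rightarrow> 'a \<Rightarrow> nat \<Rightarrow> nat \<Rightarrow> nat" where
  "cnt m x H t = (\<Sum>i<H. if lab m ((S^^i) x) = t then 1 else 0)"

definition N where "N n m s t = cnt m (xs n s) (h n s) t"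

lemma cnt_add: "cnt m x (a + b) t = cnt m x a t + cnt m ((S^^a) x) b t"
proof (induction b)
  case (Suc b)
  have "(S^^(a+b)) x = (S^^b) ((S^^a) x)" by (metis add.commute comp_apply funpow_add)
  then show ?case using Suc by (simp add: cnt_def)
qed (simp add: cnt_def)

lemma cnt_indep: assumes "x \<in> B p r" "r \<in> rng p" "m \<le> p"
  shows "cnt m x (h p r) t = N p m r t"
  unfolding N_def cnt_def
proof (rule sum.cong[OF refl])
  fix i assume i: "i \<in> {..<h p r}"
  have a1: "(S^^i) x \<in> atom p (r,i)" "(S^^i) (xs p r) \<in> atom p (r,i)"
    using S_atom[OF assms(1,2)] S_atom[OF xs_in[OF assms(2)] assms(2)] i addr_in by (metis lessThan_iff)+
  have "(r,i) \<in> idx p" using i assms(2) by (auto simp: KR_index_def)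
  then have "addr m ((S^^i) x) = addr m ((S^^i) (xs p r))" using addr_const[OF assms(3)] a1 by blast
  then show "(if lab m ((S^^i) x) = t then 1 else 0) = (if lab m ((S^^i) (xs p r)) = t then 1 else 0)"
    by (simp add: lab_def)
qed

lemma block: assumes "x \<in> roof C B p" "(S^^H) x \<in> roof C B p"
  shows "\<exists>w. \<forall>m\<le>p. \<forall>t. cnt m x H t = (\<Sum>r\<in>rng p. w r * N p m r t)"
  using assms
proof (induction H arbitrary: x rule: less_induct)
  case (less H)
  show ?case
  proof (cases "H = 0")
    case True
    then show ?thesis by (intro exI[of _ "\<lambda>_. 0"]) (simp add: cnt_def)
  next
    case False
    from less.prems(1) obtain r where r: "r \<in> rng p" "x \<in> B p r" unfolding roof_def by blast
    have hle: "h p r \<le> H"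
    proof (rule ccontr)
      assume "\<not> h p r \<le> H"
      then show False using S_notroof[OF r(2,1), of H] False less.prems(2) by simp
    qed
    define x' where "x' = (S^^(h p r)) x"
    have x'r: "x' \<in> roof C B p" using S_h_roof[OF r(2,1)] x'_def by simp
    have "(S^^(H - h p r)) x' = (S^^H) x" using hle unfolding x'_def
      by (simp add: funpow_add[symmetric, THEN fun_cong, simplified comp_def])
    then have "(S^^(H - h p r)) x' \<in> roof C B p" using less.prems(2) by simp
    moreover have "H - h p r < H" using h_pos[OF r(1)] False by simp
    ultimately obtain w' where w': "\<forall>m\<le>p. \<forall>t. cnt m x' (H - h p r) t = (\<Sum>r\<in>rng p. w' r * N p m r t)"
      using less.IH x'r by blast
    show ?thesis
    proof (intro exI[of _ "w'(r := w' r + 1)"] allI impI)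
      fix m t assume "m \<le> p"
      have "cnt m x H t = cnt m x (h p r + (H - h p r)) t" using hle by simp
      also have "\<dots> = N p m r t + cnt m x' (H - h p r) t"
        unfolding cnt_add x'_def using cnt_indep[OF r(2,1) \<open>m \<le> p\<close>] by simp
      also have "\<dots> = N p m r t + (\<Sum>r\<in>rng p. w' r * N p m r t)" using w' \<open>m \<le> p\<close> by simp
      also have "\<dots> = (\<Sum>r'\<in>rng p. (w'(r := w' r + 1)) r' * N p m r' t)"
      proof -
        have "(\<Sum>r'\<in>rng p. (w'(r := w' r + 1)) r' * N p m r' t)
              = (\<Sum>r'\<in>rng p. w' r' * N p m r' t + (if r' = r then N p m r t else 0))"
          by (rule sum.cong) auto
        also have "\<dots> = (\<Sum>r'\<in>rng p. w' r' * N p m r' t) + N p m r t"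
          using r(1) by (simp add: sum.distrib)
        finally show ?thesis by simp
      qed
      finally show "cnt m x H t = (\<Sum>r'\<in>rng p. (w'(r := w' r + 1)) r' * N p m r' t)" .
    qed
  qed
qed

lemma lab_S: "x \<in> B p r \<Longrightarrow> r \<in> rng p \<Longrightarrow> i < h p r \<Longrightarrow> lab p ((S^^i) x) = r"
  using S_atom by (simp add: lab_def)

lemma N_diag: assumes "r \<in> rng p" shows "N p p r t = (if t = r then h p r else 0)"
proof -
  have "N p p r t = (\<Sum>i<h p r. if r = t then 1 else 0)"
    unfolding N_def cnt_def using lab_S[OF xs_in[OF assms] assms] by (intro sum.cong) auto
  then show ?thesis by auto
qed

lemma N_sum: assumes "r \<in> rng p" shows "(\<Sum>t\<in>rng m. N p m r t) = h p r"
proof -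
  have "(\<Sum>t\<in>rng m. N p m r t) = (\<Sum>i<h p r. \<Sum>t\<in>rng m. if lab m ((S^^i) (xs p r)) = t then 1 else 0)"
    unfolding N_def cnt_def by (rule sum.swap)
  also have "\<dots> = (\<Sum>i<h p r. 1)"
    using lab_rng by (intro sum.cong) auto
  finally show ?thesis by simp
qed

lemma compose: assumes "m \<le> p" "p \<le> n" "s \<in> rng n"
  shows "\<exists>w. (\<forall>t. N n m s t = (\<Sum>r\<in>rng p. w r * N p m r t)) \<and> (\<forall>r\<in>rng p. N n p s r = w r * h p r)"
proof -
  have x1: "xs n s \<in> roof C B p" using xs_in[OF assms(3)] roof_mono[of p n] assms unfolding roof_def by blast
  have x2: "(S^^h n s) (xs n s) \<in> roof C B p" using S_h_roof[OF xs_in[OF assms(3)] assms(3)] roof_mono[of p n] assms by blast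
  obtain w where w: "\<forall>m'\<le>p. \<forall>t. cnt m' (xs n s) (h n s) t = (\<Sum>r\<in>rng p. w r * N p m' r t)"
    using block[OF x1 x2] by blast
  show ?thesis
  proof (intro exI[of _ w] conjI allI ballI)
    fix t show "N n m s t = (\<Sum>r\<in>rng p. w r * N p m r t)" using w assms(1) by (simp add: N_def)
  next
    fix r assume r: "r \<in> rng p"
    have "N n p s r = (\<Sum>r'\<in>rng p. w r' * N p p r' r)" using w by (simp add: N_def)
    also have "\<dots> = (\<Sum>r'\<in>rng p. if r' = r then w r * h p r else 0)"
      by (intro sum.cong) (auto simp: N_diag)
    also have "\<dots> = w r * h p r" using r by simp
    finally show "N n p s r = w r * h p r" .
  qed
qed

lemma KR5: "r \<in> rng (Suc m) \<Longrightarrow> t \<in> rng m \<Longrightarrow> \<exists>j<h (Suc m) r. preT T j (B (Suc m) r) \<subseteq> B m t"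
proof -
  assume a: "r \<in> rng (Suc m)" "t \<in> rng m"
  have h5: "\<forall>n\<ge>1. \<forall>k\<in>{1..C (n - 1)}. \<forall>l\<in>{1..C n}. \<exists>j<h n l. preT T j (B n l) \<subseteq> B (n - 1) k"
    using ckrs[unfolded CKR_sequence_def, THEN conjunct2, THEN conjunct2, THEN conjunct2,
      THEN conjunct2, THEN conjunct2, THEN conjunct2, THEN conjunct2, THEN conjunct2, THEN conjunct1] .
  show ?thesis using h5[rule_format, of "Suc m" t r] a by simp
qed

lemma N_lower: assumes "r \<in> rng (Suc m)" "t \<in> rng m" shows "h m t \<le> N (Suc m) m r t"
proof -
  obtain w where w: "\<forall>t. N (Suc m) m r t = (\<Sum>r'\<in>rng m. w r' * N m m r' t)"
    using compose[of m m "Suc m" r] assms by auto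
  have "(\<Sum>r'\<in>rng m. w r' * N m m r' t) = (\<Sum>r'\<in>rng m. if r' = t then w t * h m t else 0)"
    by (intro sum.cong refl) (auto simp: N_diag)
  then have "N (Suc m) m r t = (\<Sum>r'\<in>rng m. if r' = t then w t * h m t else 0)"
    using w by simp
  also have "\<dots> = w t * h m t" using assms(2) by simp
  finally have e: "N (Suc m) m r t = w t * h m t" .
  obtain j where j: "j < h (Suc m) r" "preT T j (B (Suc m) r) \<subseteq> B m t" using KR5[OF assms] by blast
  have "(S^^j) (xs (Suc m) r) \<in> preT T j (B (Suc m) r)"
    using xs_in[OF assms(1)] by (simp add: preT_def TjSj)
  then have "(S^^j) (xs (Suc m) r) \<in> tower T h B m t"
    using j(2) h_pos[OF assms(2)] unfolding tower_def preT_def by force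
  then have "lab m ((S^^j) (xs (Suc m) r)) = t" using tower_iff[OF assms(2)] by blast
  then have "1 \<le> N (Suc m) m r t" unfolding N_def cnt_def
    using j(1) by (intro order.trans[OF _ member_le_sum[of j]]) auto
  then have "1 \<le> w t" using e by (cases "w t") auto
  then show ?thesis using e by simp
qed

end


context ckr begin
lemma Tmeas: "T \<in> borel_measurable borel" using contT by (rule borel_measurable_continuous_onI)

lemma preT_Suc: "preT T (Suc j) A = T -` preT T j A"
  unfolding preT_def by (simp add: funpow_Suc_right vimage_comp del: funpow.simps)

lemma preT_borel: assumes "A \<in> sets borel" shows "preT T j A \<in> sets borel"
proof (induction j)
  case 0 then show ?case using assms by (simp add: preT_def)
next
  case (Suc j)
  have "T -` preT T j A \<inter> space borel \<in> sets borel" using measurable_sets[OF Tmeas Suc.IH] .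
  then show ?case by (simp add: preT_Suc)
qed

lemma mu_sets: "sets \<mu> = sets borel" using invp unfolding invariant_prob_def by blast
lemma mu_space: "space \<mu> = UNIV" using sets_eq_imp_space_eq[OF mu_sets] by simp
lemma mu_prob: "prob_space \<mu>" using invp unfolding invariant_prob_def by blast

lemma meas_preT: assumes "A \<in> sets borel" shows "measure \<mu> (preT T j A) = measure \<mu> A"
proof (induction j)
  case 0 then show ?case by (simp add: preT_def)
next
  case (Suc j)
  have "emeasure \<mu> (T -` preT T j A) = emeasure \<mu> (preT T j A)"
    using invp preT_borel[OF assms] unfolding invariant_prob_def by blast
  then show ?case using Suc by (simp add: preT_Suc measure_def)
qed

lemma B_borel: "k \<in> rng n \<Longrightarrow> B n k \<in> sets borel" using B_open by simp

lemma atom_borel: "a \<in> idx n \<Longrightarrow> atom n a \<in> sets borel"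
  unfolding KR_atom_def KR_index_def by (cases a) (auto intro!: preT_borel B_borel)

lemma tower_borel: "t \<in> rng m \<Longrightarrow> tower T h B m t \<in> sets borel"
  unfolding tower_def by (auto intro!: preT_borel B_borel)

lemma meas_atom: "s \<in> rng n \<Longrightarrow> measure \<mu> (atom n (s,i)) = measure \<mu> (B n s)"
  unfolding KR_atom_def by (simp add: meas_preT B_borel)

lemma M1: assumes "E \<in> sets borel" shows "measure \<mu> E = (\<Sum>a\<in>idx n. measure \<mu> (atom n a \<inter> E))"
proof -
  interpret P: prob_space \<mu> by (rule mu_prob)
  have "E = (\<Union>a\<in>idx n. atom n a \<inter> E)" using atom_cover[of n] by blast
  then have "measure \<mu> E = measure \<mu> (\<Union>a\<in>idx n. atom n a \<inter> E)" by simp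
  also have "\<dots> = (\<Sum>a\<in>idx n. measure \<mu> (atom n a \<inter> E))"
  proof (rule measure_finite_Union)
    show "finite (idx n)" by (rule finite_idx)
    show "(\<lambda>a. atom n a \<inter> E) ` idx n \<subseteq> sets \<mu>" using atom_borel assms mu_sets by auto
    show "disjoint_family_on (\<lambda>a. atom n a \<inter> E) (idx n)"
      unfolding disjoint_family_on_def using atom_disj by blast
    show "emeasure \<mu> (atom n a \<inter> E) \<noteq> \<infinity>" for a
      using P.emeasure_finite[of "atom n a \<inter> E"] by simp
  qed
  finally show ?thesis .
qed

lemma atom_tower: assumes "m \<le> n" "s \<in> rng n" "i < h n s" "t \<in> rng m"
  shows "atom n (s,i) \<inter> tower T h B m t = (if lab m ((S^^i) (xs n s)) = t then atom n (s,i) else {})"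
proof -
  have ai: "(s,i) \<in> idx n" using assms by (auto simp: KR_index_def)
  have x: "(S^^i) (xs n s) \<in> atom n (s,i)" using S_atom[OF xs_in[OF assms(2)] assms(2,3)] addr_in by metis
  have "y \<in> atom n (s,i) \<Longrightarrow> lab m y = lab m ((S^^i) (xs n s))" for y
    using addr_const[OF assms(1) ai _ x] by (simp add: lab_def)
  then show ?thesis using tower_iff[OF assms(4)] by auto
qed

lemma sum_if_const: "(\<Sum>i<(H::nat). if P i then (c::real) else 0) = c * real (\<Sum>i<H. if P i then 1 else 0)"
  by (induction H) (auto simp: algebra_simps)

lemma mu_tower: assumes "m \<le> n" "t \<in> rng m"
  shows "measure \<mu> (tower T h B m t) = (\<Sum>s\<in>rng n. measure \<mu> (B n s) * N n m s t)"
proof -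
  have "measure \<mu> (tower T h B m t) = (\<Sum>a\<in>idx n. measure \<mu> (atom n a \<inter> tower T h B m t))"
    using M1 tower_borel[OF assms(2)] by blast
  also have "\<dots> = (\<Sum>s\<in>rng n. \<Sum>i<h n s. measure \<mu> (atom n (s,i) \<inter> tower T h B m t))"
    unfolding idx_eq by (simp add: sum.Sigma split_def)
  also have "\<dots> = (\<Sum>s\<in>rng n. \<Sum>i<h n s. if lab m ((S^^i) (xs n s)) = t then measure \<mu> (B n s) else 0)"
    using assms by (intro sum.cong refl) (auto simp: atom_tower meas_atom)
  also have "\<dots> = (\<Sum>s\<in>rng n. measure \<mu> (B n s) * N n m s t)"
    unfolding N_def cnt_def by (intro sum.cong refl) (rule sum_if_const)
  finally show ?thesis .
qed

lemma mu_inter: assumes "m \<le> n" "tb \<in> rng n" "t \<in> rng m"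
  shows "measure \<mu> (tower T h B n tb \<inter> tower T h B m t) = measure \<mu> (B n tb) * N n m tb t"
proof -
  let ?E = "tower T h B n tb \<inter> tower T h B m t"
  have "measure \<mu> ?E = (\<Sum>a\<in>idx n. measure \<mu> (atom n a \<inter> ?E))"
    using M1 tower_borel assms by blast
  also have "\<dots> = (\<Sum>s\<in>rng n. \<Sum>i<h n s. measure \<mu> (atom n (s,i) \<inter> ?E))"
    unfolding idx_eq by (simp add: sum.Sigma split_def)
  also have "\<dots> = (\<Sum>s\<in>rng n. if s = tb then (\<Sum>i<h n s. if lab m ((S^^i) (xs n s)) = t then measure \<mu> (B n s) else 0) else 0)"
  proof (intro sum.cong refl)
    fix s assume s: "s \<in> rng n"
    have "atom n (s,i) \<inter> ?E = (atom n (s,i) \<inter> tower T h B n tb) \<inter> (atom n (s,i) \<inter> tower T h B m t)" for i by blast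
    moreover have "i < h n s \<Longrightarrow> atom n (s,i) \<inter> tower T h B n tb = (if s = tb then atom n (s,i) else {})" for i
      using atom_tower[OF order.refl s _ assms(2), of i] lab_S[OF xs_in[OF s] s] by auto
    ultimately show "(\<Sum>i<h n s. measure \<mu> (atom n (s,i) \<inter> ?E)) = (if s = tb then (\<Sum>i<h n s. if lab m ((S^^i) (xs n s)) = t then measure \<mu> (B n s) else 0) else 0)"
      using atom_tower[OF assms(1) s _ assms(3)] meas_atom[OF s] by (auto intro!: sum.cong)
  qed
  also have "\<dots> = measure \<mu> (B n tb) * N n m tb t"
    using assms(2) unfolding N_def cnt_def by (simp add: sum_if_const)
  finally show ?thesis .
qed

lemma mu_total: "(\<Sum>s\<in>rng n. measure \<mu> (B n s) * h n s) = 1"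
proof -
  have "1 = measure \<mu> UNIV" using prob_space.prob_space[OF mu_prob] mu_space by simp
  also have "\<dots> = (\<Sum>a\<in>idx n. measure \<mu> (atom n a))" using M1[of UNIV n] by simp
  also have "\<dots> = (\<Sum>s\<in>rng n. \<Sum>i<h n s. measure \<mu> (atom n (s,i)))"
    unfolding idx_eq by (simp add: sum.Sigma split_def)
  also have "\<dots> = (\<Sum>s\<in>rng n. measure \<mu> (B n s) * h n s)"
    by (intro sum.cong refl) (simp add: meas_atom mult.commute)
  finally show ?thesis by simp
qed

end



lemma doeblin:
  fixes \<gamma> :: "'u \<Rightarrow> real" and P :: "'u \<Rightarrow> 'v \<Rightarrow> real"
  assumes "finite U" "finite V" "(\<Sum>u\<in>U. \<gamma> u) = 0"
    and "\<And>u v. u \<in> U \<Longrightarrow> v \<in> V \<Longrightarrow> \<delta> \<le> P u v"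
    and "\<And>u. u \<in> U \<Longrightarrow> (\<Sum>v\<in>V. P u v) = 1"
    and "0 \<le> \<delta>" "1 \<le> card V"
  shows "(\<Sum>v\<in>V. \<bar>\<Sum>u\<in>U. \<gamma> u * P u v\<bar>) \<le> (1 - \<delta>) * (\<Sum>u\<in>U. \<bar>\<gamma> u\<bar>)"
proof -
  have "(\<Sum>v\<in>V. \<bar>\<Sum>u\<in>U. \<gamma> u * P u v\<bar>) = (\<Sum>v\<in>V. \<bar>\<Sum>u\<in>U. \<gamma> u * (P u v - \<delta>)\<bar>)"
  proof (intro sum.cong refl)
    fix v
    have "(\<Sum>u\<in>U. \<gamma> u * (P u v - \<delta>)) = (\<Sum>u\<in>U. \<gamma> u * P u v) - (\<Sum>u\<in>U. \<gamma> u) * \<delta>"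
      by (simp add: algebra_simps sum_subtractf sum_distrib_right sum_distrib_left)
    then show "\<bar>\<Sum>u\<in>U. \<gamma> u * P u v\<bar> = \<bar>\<Sum>u\<in>U. \<gamma> u * (P u v - \<delta>)\<bar>" using assms(3) by simp
  qed
  also have "\<dots> \<le> (\<Sum>v\<in>V. \<Sum>u\<in>U. \<bar>\<gamma> u\<bar> * (P u v - \<delta>))"
  proof (intro sum_mono)
    fix v assume v: "v \<in> V"
    have "\<bar>\<Sum>u\<in>U. \<gamma> u * (P u v - \<delta>)\<bar> \<le> (\<Sum>u\<in>U. \<bar>\<gamma> u * (P u v - \<delta>)\<bar>)" by (rule sum_abs)
    also have "\<dots> = (\<Sum>u\<in>U. \<bar>\<gamma> u\<bar> * (P u v - \<delta>))"
      using assms(4) v by (intro sum.cong refl) (simp add: abs_mult)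
    finally show "\<bar>\<Sum>u\<in>U. \<gamma> u * (P u v - \<delta>)\<bar> \<le> (\<Sum>u\<in>U. \<bar>\<gamma> u\<bar> * (P u v - \<delta>))" .
  qed
  also have "\<dots> = (\<Sum>u\<in>U. \<bar>\<gamma> u\<bar> * (\<Sum>v\<in>V. (P u v - \<delta>)))"
    by (subst sum.swap) (simp add: sum_distrib_left)
  also have "\<dots> = (\<Sum>u\<in>U. \<bar>\<gamma> u\<bar> * (1 - card V * \<delta>))"
    using assms(5) by (intro sum.cong refl) (simp add: sum_subtractf)
  also have "\<dots> \<le> (\<Sum>u\<in>U. \<bar>\<gamma> u\<bar> * (1 - \<delta>))"
  proof (intro sum_mono mult_left_mono)
    have "\<delta> \<le> card V * \<delta>" using assms(6,7) by (simp add: mult_le_cancel_right1)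
    then show "1 - real (card V) * \<delta> \<le> 1 - \<delta>" for u by simp
  qed auto
  also have "\<dots> = (1 - \<delta>) * (\<Sum>u\<in>U. \<bar>\<gamma> u\<bar>)" by (simp add: sum_distrib_right[symmetric] mult.commute)
  finally show ?thesis .
qed

lemma final1:
  fixes \<pi> F :: "nat \<Rightarrow> real"
  assumes "finite I" "tb \<in> I" "\<And>s. s \<in> I \<Longrightarrow> 0 \<le> \<pi> s" "(\<Sum>s\<in>I. \<pi> s) = 1"
    "\<And>s. s \<in> I \<Longrightarrow> 0 \<le> F s"
  shows "\<bar>\<pi> tb * F tb / (\<Sum>s\<in>I. \<pi> s * F s) - \<pi> tb\<bar> \<le> 1"
proof -
  let ?D = "\<Sum>s\<in>I. \<pi> s * F s"
  have a: "\<pi> tb * F tb \<le> ?D" using assms by (intro member_le_sum) auto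
  have b: "0 \<le> \<pi> tb * F tb" using assms by simp
  have r: "0 \<le> \<pi> tb * F tb / ?D \<and> \<pi> tb * F tb / ?D \<le> 1"
  proof (cases "?D = 0")
    case True then show ?thesis by simp
  next
    case False then have "0 < ?D" using a b by linarith
    then show ?thesis using a b by (simp add: divide_le_eq_1)
  qed
  have "\<pi> tb \<le> (\<Sum>s\<in>I. \<pi> s)" by (rule member_le_sum) (use assms in auto)
  then have p: "\<pi> tb \<le> 1" using assms by simp
  show ?thesis using r p assms(3)[OF assms(2)] by linarith
qed

lemma final2:
  fixes \<pi> F :: "nat \<Rightarrow> real"
  assumes "finite I" "tb \<in> I" "\<And>s. s \<in> I \<Longrightarrow> 0 \<le> \<pi> s" "(\<Sum>s\<in>I. \<pi> s) = 1"
    "\<And>s. s \<in> I \<Longrightarrow> 0 < F s" "\<And>s. s \<in> I \<Longrightarrow> \<bar>F tb - F s\<bar> \<le> \<epsilon> * F s"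
  shows "\<bar>\<pi> tb * F tb / (\<Sum>s\<in>I. \<pi> s * F s) - \<pi> tb\<bar> \<le> \<epsilon>"
proof -
  let ?D = "\<Sum>s\<in>I. \<pi> s * F s"
  have "\<pi> tb * F tb \<le> ?D" by (intro member_le_sum) (auto intro!: mult_nonneg_nonneg assms(1,2,3) less_imp_le[OF assms(5)])
  have "\<pi> tb \<le> (\<Sum>s\<in>I. \<pi> s)" by (rule member_le_sum) (use assms in auto)
  then have p: "\<pi> tb \<le> 1" using assms by simp
  have e0: "0 \<le> \<epsilon>" using assms(6)[OF assms(2)] assms(5)[OF assms(2)]
    by (auto simp: zero_le_mult_iff)
  have "0 < ?D"
  proof -
    have "\<exists>s0\<in>I. 0 < \<pi> s0"
    proof (rule ccontr)
      assume "\<not> (\<exists>s0\<in>I. 0 < \<pi> s0)"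
      then have "\<forall>s\<in>I. \<pi> s = 0" using assms(3) by (auto simp: not_less intro: order.antisym)
      then have "sum \<pi> I = 0" by simp
      with assms(4) show False by simp
    qed
    then obtain s0 where "s0 \<in> I" "0 < \<pi> s0" by blast
    then have "0 < \<pi> s0 * F s0" using assms(5) by simp
    also have "\<dots> \<le> ?D" using assms \<open>s0 \<in> I\<close> by (intro member_le_sum) (auto intro!: mult_nonneg_nonneg assms(3) less_imp_le[OF assms(5)])
    finally show ?thesis .
  qed
  have "F tb - ?D = (\<Sum>s\<in>I. \<pi> s * (F tb - F s))"
  proof -
    have "(\<Sum>s\<in>I. \<pi> s * (F tb - F s)) = F tb * (\<Sum>s\<in>I. \<pi> s) - ?D"
      by (simp add: algebra_simps sum_subtractf sum_distrib_left)
    then show ?thesis using assms(4) by simp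
  qed
  then have "\<bar>F tb - ?D\<bar> \<le> (\<Sum>s\<in>I. \<bar>\<pi> s * (F tb - F s)\<bar>)" by (simp add: sum_abs)
  also have "\<dots> \<le> (\<Sum>s\<in>I. \<pi> s * (\<epsilon> * F s))"
    using assms(3,6) by (intro sum_mono) (simp add: abs_mult mult_left_mono)
  also have "\<dots> = \<epsilon> * ?D" by (simp add: sum_distrib_left algebra_simps)
  finally have d: "\<bar>F tb - ?D\<bar> \<le> \<epsilon> * ?D" .
  have "\<pi> tb * F tb / ?D - \<pi> tb = \<pi> tb * (F tb - ?D) / ?D"
    using \<open>0 < ?D\<close> by (simp add: field_simps)
  then have "\<bar>\<pi> tb * F tb / ?D - \<pi> tb\<bar> = \<pi> tb * \<bar>F tb - ?D\<bar> / ?D"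
    using assms(3)[OF assms(2)] \<open>0 < ?D\<close> by (simp add: abs_mult)
  also have "\<dots> \<le> \<pi> tb * (\<epsilon> * ?D) / ?D"
    using d assms(3)[OF assms(2)] \<open>0 < ?D\<close> by (intro divide_right_mono mult_left_mono) auto
  also have "\<dots> = \<pi> tb * \<epsilon>" using \<open>0 < ?D\<close> by simp
  also have "\<dots> \<le> \<epsilon>" using p e0 by (simp add: mult_left_le_one_le assms(3)[OF assms(2)])
  finally show ?thesis .
qed

context ckr begin

definition F where "F n m s t = real (N n m s t) / real (h n s)"

lemma F_nonneg: "0 \<le> F n m s t" unfolding F_def by simp

lemma F_sum: assumes "s \<in> rng n" shows "(\<Sum>t\<in>rng m. F n m s t) = 1"
proof -
  have "(\<Sum>t\<in>rng m. F n m s t) = real (\<Sum>t\<in>rng m. N n m s t) / real (h n s)"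
    unfolding F_def by (simp add: sum_divide_distrib)
  also have "\<dots> = 1" using N_sum[OF assms] h_pos[OF assms] by simp
  finally show ?thesis .
qed

lemma F_le1: assumes "s \<in> rng n" "t \<in> rng m" shows "F n m s t \<le> 1"
proof -
  have "F n m s t \<le> (\<Sum>t\<in>rng m. F n m s t)" using assms(2) F_nonneg by (intro member_le_sum) auto
  then show ?thesis using F_sum[OF assms(1)] by simp
qed

lemma F_comp: assumes "m \<le> p" "p \<le> n" "s \<in> rng n"
  shows "F n m s t = (\<Sum>r\<in>rng p. F n p s r * F p m r t)"
proof -
  obtain w where w1: "\<forall>t. N n m s t = (\<Sum>r\<in>rng p. w r * N p m r t)"
    and w2: "\<forall>r\<in>rng p. N n p s r = w r * h p r" using compose[OF assms] by blast
  have "(\<Sum>r\<in>rng p. F n p s r * F p m r t) = (\<Sum>r\<in>rng p. real (w r * N p m r t) / real (h n s))"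
  proof (intro sum.cong refl)
    fix r assume r: "r \<in> rng p"
    have "real (h p r) \<noteq> 0" using h_pos[OF r] by simp
    then show "F n p s r * F p m r t = real (w r * N p m r t) / real (h n s)"
      unfolding F_def using w2 r by (simp add: field_simps)
  qed
  also have "\<dots> = real (\<Sum>r\<in>rng p. w r * N p m r t) / real (h n s)"
    by (simp add: sum_divide_distrib)
  also have "\<dots> = F n m s t" unfolding F_def using w1 by simp
  finally show ?thesis by simp
qed

lemma F_diag: "s \<in> rng n \<Longrightarrow> F n n s t = (if t = s then 1 else 0)"
  unfolding F_def using N_diag[of s n t] h_pos[of s n] by (auto simp: not_le)

definition D where "D n p s s' = (\<Sum>r\<in>rng p. \<bar>F n p s r - F n p s' r\<bar>)"

lemma D_le2: assumes "s \<in> rng n" "s' \<in> rng n" shows "D n p s s' \<le> 2"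
proof -
  have "D n p s s' \<le> (\<Sum>r\<in>rng p. F n p s r + F n p s' r)"
    unfolding D_def using F_nonneg by (intro sum_mono) (simp add: abs_le_iff)
  also have "\<dots> = 2" using F_sum[OF assms(1)] F_sum[OF assms(2)] by (simp add: sum.distrib)
  finally show ?thesis .
qed

lemma card_rng: "1 \<le> card (rng m)" using C_pos[of m] by simp

context
  fixes L :: real
  assumes L1: "1 \<le> L"
    and hL: "\<And>n r t. r \<in> rng (Suc n) \<Longrightarrow> t \<in> rng n \<Longrightarrow> real (h (Suc n) r) \<le> L * real (h n t)"
begin

lemma F_low: assumes "r \<in> rng (Suc m)" "t \<in> rng m" shows "1 / L \<le> F (Suc m) m r t"
proof -
  have ht: "0 < real (h m t)" using h_pos[OF assms(2)] by simp
  have hr: "0 < real (h (Suc m) r)" using h_pos[OF assms(1)] by simp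
  have "1 / L \<le> real (h m t) / real (h (Suc m) r)"
    using hL[OF assms] ht hr L1 by (simp add: field_simps)
  also have "\<dots> \<le> F (Suc m) m r t"
    unfolding F_def using N_lower[OF assms] hr by (simp add: divide_right_mono)
  finally show ?thesis .
qed

lemma contract: assumes "j \<le> n" "s \<in> rng n" "s' \<in> rng n"
  shows "D n (n - j) s s' \<le> 2 * (1 - 1/L) ^ j"
  using assms(1)
proof (induction j)
  case 0 then show ?case using D_le2[OF assms(2,3)] by simp
next
  case (Suc j)
  define m where "m = n - Suc j"
  have pm: "n - j = Suc m" using Suc.prems unfolding m_def by simp
  have "D n m s s' = (\<Sum>t\<in>rng m. \<bar>\<Sum>r\<in>rng (Suc m). (F n (Suc m) s r - F n (Suc m) s' r) * F (Suc m) m r t\<bar>)"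
    unfolding D_def
  proof (intro sum.cong refl)
    fix t
    have "F n m s t - F n m s' t = (\<Sum>r\<in>rng (Suc m). (F n (Suc m) s r - F n (Suc m) s' r) * F (Suc m) m r t)"
      using F_comp[of m "Suc m" n s t] F_comp[of m "Suc m" n s' t] assms pm
      by (simp add: sum_subtractf algebra_simps)
    then show "\<bar>F n m s t - F n m s' t\<bar> = \<bar>\<Sum>r\<in>rng (Suc m). (F n (Suc m) s r - F n (Suc m) s' r) * F (Suc m) m r t\<bar>"
      by simp
  qed
  also have "\<dots> \<le> (1 - 1/L) * (\<Sum>r\<in>rng (Suc m). \<bar>F n (Suc m) s r - F n (Suc m) s' r\<bar>)"
  proof (rule doeblin)
    show "(\<Sum>r\<in>rng (Suc m). F n (Suc m) s r - F n (Suc m) s' r) = 0"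
      using F_sum[OF assms(2)] F_sum[OF assms(3)] by (simp add: sum_subtractf)
    show "1 / L \<le> F (Suc m) m u v" if "u \<in> rng (Suc m)" "v \<in> rng m" for u v using F_low that by blast
    show "(\<Sum>v\<in>rng m. F (Suc m) m u v) = 1" if "u \<in> rng (Suc m)" for u using F_sum that by blast
    show "0 \<le> 1 / L" using L1 by simp
    show "1 \<le> card (rng m)" by (rule card_rng)
  qed auto
  also have "\<dots> = (1 - 1/L) * D n (n - j) s s'" unfolding D_def pm ..
  also have "\<dots> \<le> (1 - 1/L) * (2 * (1 - 1/L) ^ j)"
    using Suc L1 by (intro mult_left_mono) auto
  finally show ?case unfolding m_def by simp
qed

lemma F_pos: assumes "1 \<le> k" "k \<le> n" "s \<in> rng n" "t \<in> rng (n - k)"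
  shows "1 / L \<le> F n (n - k) s t"
proof -
  define m where "m = n - k"
  have pm: "Suc m \<le> n" using assms unfolding m_def by simp
  have "(\<Sum>r\<in>rng (Suc m). F n (Suc m) s r * (1 / L)) \<le> (\<Sum>r\<in>rng (Suc m). F n (Suc m) s r * F (Suc m) m r t)"
    using F_low assms(4) F_nonneg unfolding m_def by (intro sum_mono mult_left_mono) auto
  also have "\<dots> = F n m s t" using F_comp[of m "Suc m" n s t] pm assms(3) by simp
  moreover have "(\<Sum>r\<in>rng (Suc m). F n (Suc m) s r * (1 / L)) = 1 / L"
    using F_sum[OF assms(3)] by (simp add: sum_divide_distrib[symmetric])
  ultimately show ?thesis unfolding m_def by simp
qed

lemma relative: assumes "1 \<le> k" "k \<le> n" "s \<in> rng n" "s' \<in> rng n" "t \<in> rng (n - k)"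
  shows "\<bar>F n (n - k) s t - F n (n - k) s' t\<bar> \<le> (2 * L * (1 - 1/L) ^ (k - 1)) * F n (n - k) s' t"
proof -
  define m where "m = n - k"
  have pm: "Suc m \<le> n" "n - (k - 1) = Suc m" using assms unfolding m_def by auto
  have "F n m s t - F n m s' t = (\<Sum>r\<in>rng (Suc m). (F n (Suc m) s r - F n (Suc m) s' r) * F (Suc m) m r t)"
    using F_comp[of m "Suc m" n s t] F_comp[of m "Suc m" n s' t] assms pm
    by (simp add: sum_subtractf algebra_simps)
  then have "\<bar>F n m s t - F n m s' t\<bar> \<le> (\<Sum>r\<in>rng (Suc m). \<bar>(F n (Suc m) s r - F n (Suc m) s' r) * F (Suc m) m r t\<bar>)"
    by (simp add: sum_abs)
  also have "\<dots> \<le> (\<Sum>r\<in>rng (Suc m). \<bar>F n (Suc m) s r - F n (Suc m) s' r\<bar>)"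
  proof (intro sum_mono)
    fix r assume r: "r \<in> rng (Suc m)"
    have "F (Suc m) m r t \<le> 1" using F_le1[OF r] assms(5) unfolding m_def by blast
    then show "\<bar>(F n (Suc m) s r - F n (Suc m) s' r) * F (Suc m) m r t\<bar> \<le> \<bar>F n (Suc m) s r - F n (Suc m) s' r\<bar>"
      using F_nonneg by (simp add: abs_mult mult_left_le)
  qed
  also have "\<dots> = D n (n - (k - 1)) s s'" unfolding D_def pm ..
  also have "\<dots> \<le> 2 * (1 - 1/L) ^ (k - 1)" by (rule contract[OF _ assms(3,4)]) (use assms in simp)
  also have "\<dots> = (2 * L * (1 - 1/L) ^ (k - 1)) * (1 / L)" using L1 by simp
  also have "\<dots> \<le> (2 * L * (1 - 1/L) ^ (k - 1)) * F n m s' t"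
    using F_pos[OF assms(1,2,4,5)] L1 unfolding m_def by (intro mult_left_mono) auto
  finally show ?thesis unfolding m_def .
qed

end

end



theorem mainTheorem4:
  fixes T :: "'a::metric_space \<Rightarrow> 'a"
    and C :: "nat \<Rightarrow> nat" and h :: "nat \<Rightarrow> nat \<Rightarrow> nat" and B :: "nat \<Rightarrow> nat \<Rightarrow> 'a set"
    and \<mu> :: "'a measure"
  assumes "cantor_space TYPE('a)"
    and "continuous_on UNIV T" and "bij T"
    and "minimal_system T"
    and "CKR_sequence T C h B"
    and "LR_condition C h"
    and "invariant_prob T \<mu>"
    and "\<forall>\<nu>. invariant_prob T \<nu> \<longrightarrow> \<nu> = \<mu>"
  shows "\<exists>c::real. \<exists>\<beta>::real. c \<ge> 0 \<and> 0 \<le> \<beta> \<and> \<beta> < 1 \<and>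
    (\<forall>n k. k \<le> n \<longrightarrow>
      (\<forall>t\<in>{1..C (n - k)}. \<forall>tb\<in>{1..C n}.
         \<bar>cond_tower_prob \<mu> T h B n tb (n - k) t - measure \<mu> (tower T h B n tb)\<bar> \<le> c * \<beta> ^ k))"
proof -
  interpret K: ckr T C h B \<mu> using assms(2,3,5,7) by unfold_locales auto
  obtain L0 :: nat where L0: "\<forall>n\<ge>1. \<forall>l\<in>{1..C n}. \<forall>k\<in>{1..C (n - 1)}. h n l \<le> L0 * h (n - 1) k"
    using assms(6) unfolding LR_condition_def by blast
  define L where "L = real L0 + 2"
  have L2: "2 \<le> L" unfolding L_def by simp
  then have L1: "1 \<le> L" by simp
  have hL: "real (h (Suc n) r) \<le> L * real (h n t)" if "r \<in> {1..C (Suc n)}" "t \<in> {1..C n}" for n r t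
  proof -
    have "h (Suc n) r \<le> L0 * h n t" using L0[rule_format, of "Suc n" r t] that by simp
    then have "real (h (Suc n) r) \<le> real (L0 * h n t)" by (simp only: of_nat_le_iff)
    then have "real (h (Suc n) r) \<le> real L0 * real (h n t)" by simp
    also have "\<dots> \<le> L * real (h n t)" unfolding L_def by (intro mult_right_mono) auto
    finally show ?thesis .
  qed
  define \<beta> where "\<beta> = 1 - 1 / L"
  have b0: "1/2 \<le> \<beta>" using L2 unfolding \<beta>_def by (simp add: field_simps)
  have b1: "\<beta> < 1" using L2 unfolding \<beta>_def by simp
  define c where "c = 2 * L / \<beta>"
  have c1: "1 \<le> c" using b0 b1 L2 unfolding c_def by (simp add: field_simps)
  have main: "\<bar>cond_tower_prob \<mu> T h B n tb (n - k) t - measure \<mu> (tower T h B n tb)\<bar> \<le> c * \<beta> ^ k"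
    if kn: "k \<le> n" and t: "t \<in> {1..C (n - k)}" and tb: "tb \<in> {1..C n}" for n k t tb
  proof -
    define m where "m = n - k"
    have mn: "m \<le> n" unfolding m_def by simp
    define \<pi> where "\<pi> s = measure \<mu> (B n s) * real (h n s)" for s
    define Fv where "Fv s = K.F n m s t" for s
    have eq: "measure \<mu> (B n s) * real (K.N n m s t) = \<pi> s * Fv s" if "s \<in> {1..C n}" for s
    proof -
      have "real (h n s) \<noteq> 0" using K.h_pos[OF that] by simp
      then show ?thesis unfolding \<pi>_def Fv_def K.F_def by simp
    qed
    have num: "measure \<mu> (tower T h B n tb \<inter> tower T h B m t) = \<pi> tb * Fv tb"
      using K.mu_inter[OF mn tb t[folded m_def]] eq[OF tb] by simp
    have den: "measure \<mu> (tower T h B m t) = (\<Sum>s\<in>{1..C n}. \<pi> s * Fv s)"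
      using K.mu_tower[OF mn t[folded m_def]] eq by simp
    have tw: "measure \<mu> (tower T h B n tb) = \<pi> tb"
      using K.mu_inter[OF order.refl tb tb] K.N_diag[OF tb, of tb] unfolding \<pi>_def by simp
    have val: "cond_tower_prob \<mu> T h B n tb (n - k) t - measure \<mu> (tower T h B n tb)
        = \<pi> tb * Fv tb / (\<Sum>s\<in>{1..C n}. \<pi> s * Fv s) - \<pi> tb"
      unfolding cond_tower_prob_def m_def[symmetric] num den tw ..
    have pi0: "0 \<le> \<pi> s" for s unfolding \<pi>_def by simp
    have pi1: "(\<Sum>s\<in>{1..C n}. \<pi> s) = 1" using K.mu_total[of n] unfolding \<pi>_def .
    show ?thesis
    proof (cases "k = 0")
      case True
      have "\<bar>\<pi> tb * Fv tb / (\<Sum>s\<in>{1..C n}. \<pi> s * Fv s) - \<pi> tb\<bar> \<le> 1"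
        by (rule final1) (use tb pi0 pi1 K.F_nonneg in \<open>auto simp: Fv_def\<close>)
      then show ?thesis using True c1 val by simp
    next
      case False
      then have k1: "1 \<le> k" by simp
      have "\<bar>\<pi> tb * Fv tb / (\<Sum>s\<in>{1..C n}. \<pi> s * Fv s) - \<pi> tb\<bar> \<le> 2 * L * (1 - 1/L) ^ (k - 1)"
      proof (rule final2)
        show "0 < Fv s" if "s \<in> {1..C n}" for s
        proof -
          have "0 < 1 / L" using L1 by simp
          then show ?thesis using K.F_pos[OF L1 hL k1 kn that t] unfolding Fv_def m_def by linarith
        qed
        show "\<bar>Fv tb - Fv s\<bar> \<le> 2 * L * (1 - 1 / L) ^ (k - 1) * Fv s" if "s \<in> {1..C n}" for s
          using K.relative[OF L1 hL k1 kn tb that t] unfolding Fv_def m_def .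
      qed (use tb pi0 pi1 in auto)
      also have "2 * L * (1 - 1/L) ^ (k - 1) = c * \<beta> ^ k"
      proof -
        obtain k' where k': "k = Suc k'" using k1 by (cases k) auto
        have "\<beta> ^ k = \<beta> * \<beta> ^ (k - 1)" by (simp add: k')
        then show ?thesis unfolding c_def using b0 by (simp add: \<beta>_def[symmetric])
      qed
      finally show ?thesis using val by simp
    qed
  qed
  show ?thesis
    apply (rule exI[of _ c], rule exI[of _ \<beta>])
    using c1 b0 b1 main by auto
qed


end
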